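(* Consider a mixture of two Bernoullis with the notation below, and let $T:=\{\boldsymbol\lambda: Z_1(\boldsymbol\lambda)<1\}$. The one-cluster regions $(\pi_1,\boldsymbol\mu_1,\boldsymbol\mu_2)$ with $\boldsymbol\lambda(\boldsymbol\mu_1)\in T$, $\boldsymbol\mu_2=\overline{\mathbf x}$ and $\pi_1=0$ are attractive for GD, given a small enough step size.
   Context: Model and data: - Let $B(\mathbf x\mid\boldsymbol\mu)=\prod_{i=1}^D\mu_i^{x_i}(1-\mu_i)^{1-x_i}$ for $\mathbf x\in\{0,1\}^D$ and $\boldsymbol\mu\in[0,1]^D$. - The true distribution is $p^*(\mathbf x)=\pi_1^*B(\mathbf x\mid\boldsymbol\mu_1^* )+\pi_2^*B(\mathbf x\mid\boldsymbol\mu_2^* )$ with $\pi_1^*\in(0,1)$ and $\pi_2^*=1-\pi_1^*$. - The model is $p(\mathbf x\mid\theta)=\pi_1B(\mathbf x\mid\boldsymbol\mu_1)+\pi_2B(\mathbf x\mid\boldsymbol\mu_2)$. Notation: - $\overline{\mathbf x}=\mathbb E_{p^*}[\mathbf x]$ and $S_i=\overline x_i(1-\overline x_i)$. - $\boldsymbol\mu^*=(\boldsymbol\mu_1^*-\boldsymbol\mu_2^* )/2$. - With $\mathbf b=\boldsymbol\mu_1-\overline{\mathbf x}$, define the affine map $\boldsymbol\lambda(\boldsymbol\mu_1)$ by $\lambda_i=2S_i^{-1}\mu_i^*b_i$. - $Z_1(\boldsymbol\lambda)=\pi_1^*\prod_{i=1}^D(1+\pi_2^*\lambda_i)+\pi_2^*\prod_{i=1}^D(1-\pi_1^*\lambda_i)$.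 This equals $\int p^*(\mathbf x)B(\mathbf x\mid\boldsymbol\mu_1)/B(\mathbf x\mid\overline{\mathbf x})$, the leading-order (as $\pi_1\to0$) value of $Z_1=\mathbb E_{p^*}[B(\mathbf x\mid\boldsymbol\mu_1)/p(\mathbf x\mid\theta)]$ when $\boldsymbol\mu_2=\overline{\mathbf x}$. GD: - GD is projected gradient ascent on $\mathbb E_{p^*}[\log p(\mathbf x\mid\theta)]$ with step size $\alpha$, with the mixing coefficients Euclidean-projected onto the simplex. - In this regime it updates $(\pi_1,\pi_2)\leftarrow(\pi_1+\tfrac\alpha2(Z_1-1),\pi_2-\tfrac\alpha2(Z_1-1))$ and $\boldsymbol\mu_2\leftarrow\boldsymbol\mu_2+\alpha\Sigma_2^{-1}(\overline{\mathbf x}-\boldsymbol\mu_2)$. - $\boldsymbol\mu_1$ moves by an amount proportional to $\pi_1$. Attractive means that GD initialized near such a configuration (with $\pi_1$ small) converges to a configuration with $\pi_1=0$. Standing assumption: $\sigma_{ij}=4\pi_1^*\pi_2^*\mu_i^*\mu_j^*\neq0$ for all $i\neq j$. *)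

theory Defs
  imports "HOL-Analysis.Analysis"
begin

text \<open>Binary data points x in {0,1}^D are functions 'd => bool (x i = True means x_i = 1);
  the dimension D is CARD('d). Parameter vectors mu live in real^'d.\<close>

definition bit :: "bool \<Rightarrow> nat" where
  "bit b = (if b then 1 else 0)"

definition bern :: "('d::finite \<Rightarrow> bool) \<Rightarrow> real^'d \<Rightarrow> real" where
  "bern x mu = (\<Prod>i\<in>UNIV. (mu$i) ^ bit (x i) * (1 - mu$i) ^ (1 - bit (x i)))"

definition mix2 :: "real \<Rightarrow> real \<Rightarrow> real^'d \<Rightarrow> real^'d \<Rightarrow> ('d::finite \<Rightarrow> bool) \<Rightarrow> real" where
  "mix2 pi1 pi2 mu1 mu2 x = pi1 * bern x mu1 + pi2 * bern x mu2"

type_synonym 'd param = "real \<times> real \<times> (real^'d) \<times> (real^'d)"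

definition loglik :: "(('d::finite \<Rightarrow> bool) \<Rightarrow> real) \<Rightarrow> 'd param \<Rightarrow> real" where
  "loglik ps \<theta> = (case \<theta> of (pi1, pi2, mu1, mu2) \<Rightarrow>
      (\<Sum>x\<in>UNIV. ps x * ln (mix2 pi1 pi2 mu1 mu2 x)))"

definition grad :: "('a::real_inner \<Rightarrow> real) \<Rightarrow> 'a \<Rightarrow> 'a" where
  "grad f \<theta> = (THE D. GDERIV f \<theta> :> D)"

definition simplex2 :: "(real \<times> real) set" where
  "simplex2 = {(a, b). 0 \<le> a \<and> 0 \<le> b \<and> a + b = 1}"

definition gd_step :: "(('d::finite \<Rightarrow> bool) \<Rightarrow> real) \<Rightarrow> real \<Rightarrow> 'd param \<Rightarrow> 'd param" where
  "gd_step ps \<alpha> \<theta> = (case \<theta> + \<alpha> *\<^sub>R grad (loglik ps) \<theta> of (a, b, m1, m2) \<Rightarrow>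
      (case closest_point simplex2 (a, b) of (a', b') \<Rightarrow> (a', b', m1, m2)))"

definition xmean :: "(('d::finite \<Rightarrow> bool) \<Rightarrow> real) \<Rightarrow> real^'d" where
  "xmean ps = (\<Sum>x\<in>UNIV. ps x *\<^sub>R (\<chi> i. real (bit (x i))))"

definition lam :: "real^'d \<Rightarrow> real^'d \<Rightarrow> real^'d \<Rightarrow> real^'d::finite" where
  "lam xbar mustar mu1 =
     (\<chi> i. 2 * inverse (xbar$i * (1 - xbar$i)) * mustar$i * (mu1$i - xbar$i))"

definition Z1 :: "real \<Rightarrow> real \<Rightarrow> real^'d::finite \<Rightarrow> real" where
  "Z1 p1 p2 l = p1 * (\<Prod>i\<in>UNIV. 1 + p2 * l$i) + p2 * (\<Prod>i\<in>UNIV. 1 - p1 * l$i)"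

end

theory Submission
  imports Defs "HOL-Library.FuncSet"
begin


lemma bern_alt: "bern x m = (\<Prod>i\<in>UNIV. if x i then m$i else 1 - m$i)"
  unfolding bern_def by (intro prod.cong) (auto simp: bit_def)

lemma sum_prod_bool:
  fixes f :: "'d::finite \<Rightarrow> bool \<Rightarrow> real"
  shows "(\<Sum>x\<in>(UNIV::('d\<Rightarrow>bool) set). \<Prod>i\<in>UNIV. f i (x i)) = (\<Prod>i\<in>UNIV. f i True + f i False)"
proof -
  have "(\<Prod>i\<in>UNIV. f i True + f i False) = (\<Prod>i\<in>UNIV. \<Sum>y\<in>UNIV. f i y)"
    by (simp add: UNIV_bool add.commute)
  also have "\<dots> = (\<Sum>g\<in>PiE UNIV (\<lambda>_. UNIV). \<Prod>i\<in>UNIV. f i (g i))"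
    by (rule prod_sum_PiE) auto
  also have "PiE (UNIV::'d set) (\<lambda>_. UNIV::bool set) = UNIV" by auto
  finally show ?thesis by simp
qed




definition fac :: "('d::finite \<Rightarrow> bool) \<Rightarrow> real^'d \<Rightarrow> 'd \<Rightarrow> real" where
  "fac x m i = (if x i then m$i else 1 - m$i)"

definition dbern :: "('d::finite \<Rightarrow> bool) \<Rightarrow> real^'d \<Rightarrow> 'd \<Rightarrow> real" where
  "dbern x m i = (if x i then 1 else -1) * (\<Prod>j\<in>UNIV-{i}. fac x m j)"

lemma bern_fac: "bern x m = (\<Prod>i\<in>UNIV. fac x m i)"
  unfolding bern_alt fac_def ..

lemma fac_deriv: "((\<lambda>m. fac x m i) has_derivative (\<lambda>v. (if x i then 1 else -1) * v$i)) (at m)"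
proof (cases "x i")
  case True
  then show ?thesis unfolding fac_def
    using bounded_linear_vec_nth[of i, THEN bounded_linear.has_derivative, OF has_derivative_ident]
    by simp
next
  case False
  have "((\<lambda>m. 1 - m$i) has_derivative (\<lambda>v. 0 - v$i)) (at m)"
    by (intro has_derivative_diff has_derivative_const
        bounded_linear_vec_nth[of i, THEN bounded_linear.has_derivative, OF has_derivative_ident])
  with False show ?thesis unfolding fac_def by simp
qed

lemma bern_deriv: "((\<lambda>m. bern x m) has_derivative (\<lambda>v. \<Sum>i\<in>UNIV. v$i * dbern x m i)) (at m)"
  unfolding bern_fac
  apply (rule has_derivative_eq_rhs)
   apply (rule has_derivative_prod)
   apply (rule fac_deriv)
  apply (simp add: dbern_def mult_ac)
  done

definition G1 :: "(('d::finite \<Rightarrow> bool) \<Rightarrow> real) \<Rightarrow> real \<Rightarrow> real \<Rightarrow> real^'d \<Rightarrow> real^'d \<Rightarrow> real" where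
  "G1 ps a b m1 m2 = (\<Sum>x\<in>UNIV. ps x * bern x m1 / mix2 a b m1 m2 x)"
definition G2 :: "(('d::finite \<Rightarrow> bool) \<Rightarrow> real) \<Rightarrow> real \<Rightarrow> real \<Rightarrow> real^'d \<Rightarrow> real^'d \<Rightarrow> real" where
  "G2 ps a b m1 m2 = (\<Sum>x\<in>UNIV. ps x * bern x m2 / mix2 a b m1 m2 x)"
definition H1 :: "(('d::finite \<Rightarrow> bool) \<Rightarrow> real) \<Rightarrow> real \<Rightarrow> real \<Rightarrow> real^'d \<Rightarrow> real^'d \<Rightarrow> real^'d" where
  "H1 ps a b m1 m2 = (\<chi> i. \<Sum>x\<in>UNIV. ps x * dbern x m1 i / mix2 a b m1 m2 x)"
definition H2 :: "(('d::finite \<Rightarrow> bool) \<Rightarrow> real) \<Rightarrow> real \<Rightarrow> real \<Rightarrow> real^'d \<Rightarrow> real^'d \<Rightarrow> real^'d" where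
  "H2 ps a b m1 m2 = (\<chi> i. \<Sum>x\<in>UNIV. ps x * dbern x m2 i / mix2 a b m1 m2 x)"

definition gr :: "(('d::finite \<Rightarrow> bool) \<Rightarrow> real) \<Rightarrow> 'd param \<Rightarrow> 'd param" where
  "gr ps \<theta> = (case \<theta> of (a, b, m1, m2) \<Rightarrow>
     (G1 ps a b m1 m2, G2 ps a b m1 m2, a *\<^sub>R H1 ps a b m1 m2, b *\<^sub>R H2 ps a b m1 m2))"

lemma loglik_alt: "loglik ps = (\<lambda>\<theta>. \<Sum>x\<in>UNIV. ps x * ln (fst \<theta> * bern x (fst (snd (snd \<theta>)))
    + fst (snd \<theta>) * bern x (snd (snd (snd \<theta>)))))"
  by (auto simp: fun_eq_iff loglik_def mix2_def split: prod.splits)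

lemma gderiv_loglik:
  fixes m1 m2 :: "real^'d::finite" and ps :: "('d \<Rightarrow> bool) \<Rightarrow> real"
  assumes pos: "\<And>x. mix2 a b m1 m2 x > 0"
  shows "GDERIV (loglik ps) (a, b, m1, m2) :> gr ps (a, b, m1, m2)"
proof -
  let ?t = "(a, b, m1, m2) :: 'd param"
  have d1: "((\<lambda>\<theta>::'d param. bern x (fst (snd (snd \<theta>)))) has_derivative
     (\<lambda>h. \<Sum>i\<in>UNIV. (fst (snd (snd h)))$i * dbern x m1 i)) (at ?t)" for x
  proof -
    have "((\<lambda>\<theta>::'d param. fst (snd (snd \<theta>))) has_derivative (\<lambda>h. fst (snd (snd h)))) (at ?t)"
      by (intro derivative_intros)
    from has_derivative_compose[OF this bern_deriv] show ?thesis by simp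
  qed
  have d2: "((\<lambda>\<theta>::'d param. bern x (snd (snd (snd \<theta>)))) has_derivative
     (\<lambda>h. \<Sum>i\<in>UNIV. (snd (snd (snd h)))$i * dbern x m2 i)) (at ?t)" for x
  proof -
    have "((\<lambda>\<theta>::'d param. snd (snd (snd \<theta>))) has_derivative (\<lambda>h. snd (snd (snd h)))) (at ?t)"
      by (intro derivative_intros)
    from has_derivative_compose[OF this bern_deriv] show ?thesis by simp
  qed
  show ?thesis
    unfolding gderiv_def loglik_alt
    apply (rule has_derivative_eq_rhs)
     apply (rule has_derivative_sum)
     apply (rule has_derivative_mult_right)
     apply (rule has_derivative_ln)
    using pos apply (simp add: mix2_def)
      apply (rule has_derivative_add)
       apply (rule has_derivative_mult[OF has_derivative_fst[OF has_derivative_ident] d1])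
      apply (rule has_derivative_mult[OF has_derivative_fst[OF has_derivative_snd[OF has_derivative_ident]] d2])
    apply (rule ext)
    subgoal for h
      apply (cases h)
      apply (simp add: gr_def G1_def G2_def H1_def H2_def inner_vec_def mix2_def sum_distrib_left sum_distrib_right
          sum_divide_distrib algebra_simps divide_inverse sum.distrib)
      apply (subst (1 2) sum.swap)
      apply (simp add: mult_ac)
      done
    done
qed

lemma grad_loglik:
  fixes m1 m2 :: "real^'d::finite" and ps :: "('d \<Rightarrow> bool) \<Rightarrow> real"
  assumes pos: "\<And>x. mix2 a b m1 m2 x > 0"
  shows "grad (loglik ps) (a, b, m1, m2) = gr ps (a, b, m1, m2)"
  unfolding grad_def
proof (rule the_equality)
  show "GDERIV (loglik ps) (a, b, m1, m2) :> gr ps (a, b, m1, m2)" by (rule gderiv_loglik[OF pos])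
  fix D assume "GDERIV (loglik ps) (a, b, m1, m2) :> D"
  then have "(\<lambda>h. inner h D) = (\<lambda>h. inner h (gr ps (a, b, m1, m2)))"
    using gderiv_loglik[OF pos] unfolding gderiv_def by (rule has_derivative_unique)
  then have "inner (D - gr ps (a, b, m1, m2)) D = inner (D - gr ps (a, b, m1, m2)) (gr ps (a, b, m1, m2))"
    by metis
  then have "inner (D - gr ps (a, b, m1, m2)) (D - gr ps (a, b, m1, m2)) = 0"
    by (simp add: inner_diff_right)
  then show "D = gr ps (a, b, m1, m2)" by simp
qed

lemma convex_simplex2: "convex simplex2"
  unfolding convex_def simplex2_def
  apply clarsimp
  subgoal for a b aa ba u v
  proof -
    assume h: "a + b = 1" "aa + ba = 1" "u + v = 1"
    have "u * a + v * aa + (u * b + v * ba) = u * (a + b) + v * (aa + ba)" by (simp add: algebra_simps)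
    then show ?thesis using h by simp
  qed
  done

lemma closed_simplex2: "closed simplex2"
proof -
  have "simplex2 = {p. 0 \<le> fst p} \<inter> {p. 0 \<le> snd p} \<inter> {p. fst p + snd p = 1}"
    unfolding simplex2_def by auto
  moreover have "closed {p::real\<times>real. 0 \<le> fst p}"
    by (intro closed_Collect_le continuous_intros)
  moreover have "closed {p::real\<times>real. 0 \<le> snd p}"
    by (intro closed_Collect_le continuous_intros)
  moreover have "closed {p::real\<times>real. fst p + snd p = 1}"
    by (intro closed_Collect_eq continuous_intros)
  ultimately show ?thesis by (metis closed_Int)
qed

lemma proj_simplex2:
  "closest_point simplex2 (u, v) = (max 0 (min 1 ((u - v + 1) / 2)), 1 - max 0 (min 1 ((u - v + 1) / 2)))"
proof -
  define t where "t = max 0 (min 1 ((u - v + 1) / 2))"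
  have "(t, 1 - t) = closest_point simplex2 (u, v)"
  proof (rule closest_point_unique[OF convex_simplex2 closed_simplex2])
    show "(t, 1 - t) \<in> simplex2" unfolding simplex2_def t_def by auto
    show "\<forall>z\<in>simplex2. dist (u, v) (t, 1 - t) \<le> dist (u, v) z"
    proof
      fix z assume "z \<in> simplex2"
      then obtain c d where z: "z = (c, d)" "0 \<le> c" "0 \<le> d" "c + d = 1"
        unfolding simplex2_def by auto
      have "(u - t)^2 + (v - (1 - t))^2 \<le> (u - c)^2 + (v - d)^2"
      proof -
        define w where "w = (u - v + 1) / 2"
        have e1: "(u - t)^2 + (v - (1 - t))^2 = 2 * (t - w)^2 + ((u - w)^2 + (v - 1 + w)^2 - 0)"
          unfolding w_def by (simp add: power2_eq_square field_simps)
        have e2: "(u - c)^2 + (v - d)^2 = 2 * (c - w)^2 + ((u - w)^2 + (v - 1 + w)^2 - 0)"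
          using z(4) unfolding w_def by (simp add: power2_eq_square field_simps flip: eq_diff_eq)
        have "\<bar>t - w\<bar> \<le> \<bar>c - w\<bar>"
          using z unfolding t_def w_def[symmetric] by (auto simp: abs_if max_def min_def)
        then have "(t - w)^2 \<le> (c - w)^2" by (simp add: abs_le_square_iff)
        then show ?thesis using e1 e2 by simp
      qed
      then show "dist (u, v) (t, 1 - t) \<le> dist (u, v) z"
        unfolding z dist_Pair_Pair dist_real_def
        by (intro real_sqrt_le_mono) (simp add: power2_abs power2_commute)
    qed
  qed
  then show ?thesis unfolding t_def by simp
qed




lemma gd_step_eq:
  fixes m1 m2 :: "real^'d::finite"
  assumes "b = 1 - a" "\<And>x. mix2 a b m1 m2 x > 0"
  shows "gd_step ps \<alpha> (a, b, m1, m2) =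
    (max 0 (min 1 (a + \<alpha> * (G1 ps a b m1 m2 - G2 ps a b m1 m2) / 2)),
     1 - max 0 (min 1 (a + \<alpha> * (G1 ps a b m1 m2 - G2 ps a b m1 m2) / 2)),
     m1 + (\<alpha> * a) *\<^sub>R H1 ps a b m1 m2, m2 + (\<alpha> * b) *\<^sub>R H2 ps a b m1 m2)"
proof -
  have e: "(a + \<alpha> * G1 ps a b m1 m2 - (b + \<alpha> * G2 ps a b m1 m2) + 1) / 2
      = a + \<alpha> * (G1 ps a b m1 m2 - G2 ps a b m1 m2) / 2"
    using assms(1) by (simp add: field_simps)
  show ?thesis
    unfolding gd_step_def grad_loglik[OF assms(2)]
    by (simp add: gr_def proj_simplex2 e)
qed

lemma sum_bern_prod:
  fixes s :: "real^'d::finite"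
  shows "(\<Sum>x\<in>UNIV. bern x s * (\<Prod>i\<in>UNIV. c i (x i)))
     = (\<Prod>i\<in>UNIV. s$i * c i True + (1 - s$i) * c i False)"
proof -
  have "(\<Sum>x\<in>UNIV. bern x s * (\<Prod>i\<in>UNIV. c i (x i)))
      = (\<Sum>x\<in>UNIV. \<Prod>i\<in>UNIV. (if x i then s$i else 1 - s$i) * c i (x i))"
    by (simp add: bern_alt prod.distrib)
  also have "\<dots> = (\<Prod>i\<in>UNIV. s$i * c i True + (1 - s$i) * c i False)"
    by (rule sum_prod_bool[where f = "\<lambda>i b. (if b then s$i else 1 - s$i) * c i b", simplified])
  finally show ?thesis .
qed

lemma sum_bern: "(\<Sum>x\<in>UNIV. bern x (s::real^'d::finite)) = 1"
  using sum_bern_prod[of s "\<lambda>_ _. 1"] by simp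

lemma sum_bern_bit: "(\<Sum>x\<in>UNIV. bern x (s::real^'d::finite) * real (bit (x i))) = s$i"
proof -
  have "(\<Sum>x\<in>UNIV. bern x s * real (bit (x i)))
      = (\<Sum>x\<in>UNIV. bern x s * (\<Prod>j\<in>UNIV. (if j = i then real (bit (x j)) else 1)))"
    by (simp add: prod.delta)
  also have "\<dots> = (\<Prod>j\<in>UNIV. s$j * (if j = i then real (bit True) else 1)
        + (1 - s$j) * (if j = i then real (bit False) else 1))"
    by (rule sum_bern_prod)
  also have "\<dots> = (\<Prod>j\<in>UNIV. if j = i then s$i else 1)"
    by (intro prod.cong) (auto simp: bit_def)
  finally show ?thesis by (simp add: prod.delta)
qed




lemma bern_pos: "(\<And>i. 0 < m$i \<and> m$i < 1) \<Longrightarrow> bern x m > 0"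
  unfolding bern_alt by (intro prod_pos) auto

lemma factor1:
  fixes X a c m p1 p2 :: real
  assumes hx: "X = p1*a + p2*c" and hp: "p2 = 1 - p1" and "0 < X" "X < 1"
  shows "a*(m/X) + (1-a)*((1-m)/(1-X)) = 1 + p2*(2*inverse(X*(1-X))*((a-c)/2)*(m-X))"
proof -
  have nz: "X \<noteq> 0" "1 - X \<noteq> 0" using assms by auto
  have L: "a*(m/X) + (1-a)*((1-m)/(1-X)) = (a*m*(1-X) + (1-a)*(1-m)*X)/(X*(1-X))"
    using nz by (simp add: field_simps)
  have R: "1 + p2*(2*inverse(X*(1-X))*((a-c)/2)*(m-X)) = (X*(1-X) + p2*(a-c)*(m-X))/(X*(1-X))"
    using nz by (simp add: field_simps)
  have N: "a*m*(1-X) + (1-a)*(1-m)*X = X*(1-X) + p2*(a-c)*(m-X)"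
    unfolding hx hp by (simp add: algebra_simps)
  show ?thesis unfolding L R N ..
qed
lemma factor2:
  fixes X a c m p1 p2 :: real
  assumes hx: "X = p1*a + p2*c" and hp: "p2 = 1 - p1" and "0 < X" "X < 1"
  shows "c*(m/X) + (1-c)*((1-m)/(1-X)) = 1 - p1*(2*inverse(X*(1-X))*((a-c)/2)*(m-X))"
proof -
  have nz: "X \<noteq> 0" "1 - X \<noteq> 0" using assms by auto
  have L: "c*(m/X) + (1-c)*((1-m)/(1-X)) = (c*m*(1-X) + (1-c)*(1-m)*X)/(X*(1-X))"
    using nz by (simp add: field_simps)
  have R: "1 - p1*(2*inverse(X*(1-X))*((a-c)/2)*(m-X)) = (X*(1-X) - p1*(a-c)*(m-X))/(X*(1-X))"
    using nz by (simp add: field_simps)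
  have N: "c*m*(1-X) + (1-c)*(1-m)*X = X*(1-X) - p1*(a-c)*(m-X)"
    unfolding hx hp by (simp add: algebra_simps)
  show ?thesis unfolding L R N ..
qed

locale bmix =
  fixes p1 p2 :: real and s1 s2 mu1 :: "real^'d::finite"
  assumes p1: "0 < p1" "p1 < 1" and p2: "p2 = 1 - p1"
    and s1: "\<forall>i. 0 \<le> s1$i \<and> s1$i \<le> 1"
    and s2: "\<forall>i. 0 \<le> s2$i \<and> s2$i \<le> 1"
    and cross: "\<forall>i j. i \<noteq> j \<longrightarrow>
           4 * p1 * p2 * ((s1 - s2)/\<^sub>R 2)$i * ((s1 - s2)/\<^sub>R 2)$j \<noteq> 0"
    and Zlt: "Z1 p1 p2 (lam (xmean (mix2 p1 p2 s1 s2)) ((s1 - s2)/\<^sub>R 2) mu1) < 1"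
begin

abbreviation "ps \<equiv> mix2 p1 p2 s1 s2"
abbreviation "xb \<equiv> xmean ps"

lemma sum_ps: "(\<Sum>x\<in>UNIV. ps x) = 1"
  by (simp add: mix2_def sum.distrib flip: sum_distrib_left add: sum_bern p2)

lemma xb_eq: "xb$i = p1 * s1$i + p2 * s2$i"
proof -
  have "xb$i = (\<Sum>x\<in>UNIV. ps x * real (bit (x i)))"
    by (simp add: xmean_def)
  also have "\<dots> = p1 * (\<Sum>x\<in>UNIV. bern x s1 * real (bit (x i))) + p2 * (\<Sum>x\<in>UNIV. bern x s2 * real (bit (x i)))"
    by (simp add: mix2_def sum.distrib sum_distrib_left algebra_simps)
  finally show ?thesis by (simp add: sum_bern_bit)
qed

lemma s_neq: "s1$i \<noteq> s2$i"
proof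
  assume eq: "s1$i = s2$i"
  have "\<forall>j. j = i"
  proof
    fix j show "j = i"
    proof (rule ccontr)
      assume "j \<noteq> i"
      with cross have "4 * p1 * p2 * ((s1 - s2)/\<^sub>R 2)$j * ((s1 - s2)/\<^sub>R 2)$i \<noteq> 0" by blast
      with eq show False by simp
    qed
  qed
  then have U: "(UNIV::'d set) = {i}" by auto
  have "Z1 p1 p2 (lam xb ((s1 - s2)/\<^sub>R 2) mu1) = 1"
    unfolding Z1_def U using p2 by (simp add: algebra_simps)
  with Zlt show False by simp
qed

lemma xb_bounds: "0 < xb$i \<and> xb$i < 1"
proof -
  have a: "0 \<le> s1$i" "s1$i \<le> 1" "0 \<le> s2$i" "s2$i \<le> 1" using s1 s2 by auto
  have ne: "s1$i \<noteq> s2$i" by (rule s_neq)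
  have q: "0 < p2" using p1 p2 by simp
  have e1: "xb$i = s1$i + p2 * (s2$i - s1$i)" and e2: "xb$i = s2$i + p1 * (s1$i - s2$i)"
    by (simp_all only: xb_eq) (simp_all add: p2 algebra_simps)
  consider "s1$i < s2$i" | "s2$i < s1$i" using ne by linarith
  then show ?thesis
  proof cases
    case 1
    have "0 < p2 * (s2$i - s1$i)" "p1 * (s1$i - s2$i) < 0" using 1 q p1 by (simp_all add: mult_pos_neg)
    then show ?thesis using e1 e2 a by linarith
  next
    case 2
    have "p2 * (s2$i - s1$i) < 0" "0 < p1 * (s1$i - s2$i)" using 2 q p1 by (simp_all add: mult_pos_neg)
    then show ?thesis using e1 e2 a by linarith
  qed
qed

lemma xb_pos: "0 < xb$i" and xb_lt1: "xb$i < 1" using xb_bounds by auto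

lemma G1_base: "G1 ps 0 1 mu1 xb = Z1 p1 p2 (lam xb ((s1 - s2)/\<^sub>R 2) mu1)"
proof -
  define c where "c i b = (if b then mu1$i else 1 - mu1$i) / (if b then xb$i else 1 - xb$i)" for i b
  have r: "bern x mu1 / bern x xb = (\<Prod>i\<in>UNIV. c i (x i))" for x
    unfolding bern_alt c_def by (simp add: prod_dividef)
  have "G1 ps 0 1 mu1 xb = (\<Sum>x\<in>UNIV. ps x * (bern x mu1 / bern x xb))"
    unfolding G1_def by (simp add: mix2_def[of 0])
  also have "\<dots> = (\<Sum>x\<in>UNIV. p1 * (bern x s1 * (\<Prod>i\<in>UNIV. c i (x i))) + p2 * (bern x s2 * (\<Prod>i\<in>UNIV. c i (x i))))"
    unfolding r by (simp add: mix2_def[of p1] algebra_simps)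
  also have "\<dots> = p1 * (\<Prod>i\<in>UNIV. s1$i * c i True + (1 - s1$i) * c i False)
      + p2 * (\<Prod>i\<in>UNIV. s2$i * c i True + (1 - s2$i) * c i False)"
    by (simp add: sum.distrib flip: sum_distrib_left add: sum_bern_prod)
  also have "\<dots> = Z1 p1 p2 (lam xb ((s1 - s2)/\<^sub>R 2) mu1)"
    unfolding Z1_def lam_def c_def
    using factor1[OF xb_eq p2 xb_pos xb_lt1] factor2[OF xb_eq p2 xb_pos xb_lt1]
    by simp
  finally show ?thesis .
qed

lemma bern_xb_pos: "bern x xb > 0"
  by (rule bern_pos) (simp add: xb_pos xb_lt1)

lemma G2_base: "G2 ps 0 1 mu1 xb = 1"
proof -
  have "G2 ps 0 1 mu1 xb = (\<Sum>x\<in>UNIV. ps x)"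
    unfolding G2_def
  proof (intro sum.cong refl)
    fix x have "bern x xb \<noteq> 0" using bern_xb_pos[of x] by simp
    then show "ps x * bern x xb / mix2 0 1 mu1 xb x = ps x" by (simp add: mix2_def[of 0])
  qed
  then show ?thesis using sum_ps by simp
qed

lemma dbern_div:
  assumes "\<And>j. 0 < m$j \<and> m$j < 1"
  shows "dbern x m i / bern x m = (if x i then 1 / m$i else - 1 / (1 - m$i))"
proof -
  define P where "P = (\<Prod>j\<in>UNIV-{i}. fac x m j)"
  have b: "bern x m = fac x m i * P"
    unfolding bern_fac P_def by (simp add: prod.remove)
  have "P > 0"
    unfolding P_def using assms by (intro prod_pos) (auto simp: fac_def)
  then have "dbern x m i / bern x m = (if x i then 1 else -1) / fac x m i"
    unfolding b dbern_def P_def[symmetric] by simp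
  then show ?thesis by (simp add: fac_def)
qed

lemma H2_phase2:
  assumes m: "\<And>j. 0 < m$j \<and> m$j < 1"
  shows "H2 ps 0 1 m1 m $ i = (xb$i - m$i) / (m$i * (1 - m$i))"
proof -
  have "H2 ps 0 1 m1 m $ i = (\<Sum>x\<in>UNIV. ps x * (dbern x m i / bern x m))"
    unfolding H2_def by (simp add: mix2_def[of 0])
  also have "\<dots> = (\<Sum>x\<in>UNIV. (ps x * real (bit (x i))) * (1 / m$i) - (ps x - ps x * real (bit (x i))) * (1 / (1 - m$i)))"
    unfolding dbern_div[OF m] by (intro sum.cong) (auto simp: bit_def)
  also have "\<dots> = (\<Sum>x\<in>UNIV. ps x * real (bit (x i))) * (1 / m$i) - ((\<Sum>x\<in>UNIV. ps x) - (\<Sum>x\<in>UNIV. ps x * real (bit (x i)))) * (1 / (1 - m$i))"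
    by (simp only: sum_subtractf flip: sum_distrib_right)
  also have "(\<Sum>x\<in>UNIV. ps x * real (bit (x i))) = xb$i"
    by (simp add: xmean_def)
  also have "\<dots> * (1 / m$i) - ((\<Sum>x\<in>UNIV. ps x) - \<dots>) * (1 / (1 - m$i)) = xb$i * (1 / m$i) - (1 - xb$i) * (1 / (1 - m$i))"
    by (simp only: sum_ps)
  also have "\<dots> = (xb$i - m$i) / (m$i * (1 - m$i))"
    using m[of i] by (simp add: field_simps)
  finally show ?thesis .
qed

end



lemma cont_fac[continuous_intros]: "continuous (at z) f \<Longrightarrow> continuous (at z) (\<lambda>\<theta>. fac x (f \<theta>) i)"
  using continuous_at_compose[of z f "\<lambda>m. fac x m i", unfolded o_def] has_derivative_continuous[OF fac_deriv]
  by blast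

lemma cont_bern[continuous_intros]: "continuous (at z) f \<Longrightarrow> continuous (at z) (\<lambda>\<theta>. bern x (f \<theta>))"
  unfolding bern_fac by (intro continuous_intros)

lemma cont_dbern[continuous_intros]: "continuous (at z) f \<Longrightarrow> continuous (at z) (\<lambda>\<theta>. dbern x (f \<theta>) i)"
  unfolding dbern_def by (intro continuous_intros)

definition mixT :: "'d::finite param \<Rightarrow> ('d \<Rightarrow> bool) \<Rightarrow> real" where
  "mixT \<theta> x = mix2 (fst \<theta>) (fst (snd \<theta>)) (fst (snd (snd \<theta>))) (snd (snd (snd \<theta>))) x"

definition DT :: "(('d::finite \<Rightarrow> bool) \<Rightarrow> real) \<Rightarrow> 'd param \<Rightarrow> real" where
  "DT ps \<theta> = G1 ps (fst \<theta>) (fst (snd \<theta>)) (fst (snd (snd \<theta>))) (snd (snd (snd \<theta>)))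
            - G2 ps (fst \<theta>) (fst (snd \<theta>)) (fst (snd (snd \<theta>))) (snd (snd (snd \<theta>)))"

definition KT :: "(('d::finite \<Rightarrow> bool) \<Rightarrow> real) \<Rightarrow> 'd param \<Rightarrow> real" where
  "KT ps \<theta> = \<bar>DT ps \<theta>\<bar>
     + \<bar>fst \<theta>\<bar> * (\<Sum>i\<in>UNIV. \<bar>H1 ps (fst \<theta>) (fst (snd \<theta>)) (fst (snd (snd \<theta>))) (snd (snd (snd \<theta>))) $ i\<bar>)
     + \<bar>fst (snd \<theta>)\<bar> * (\<Sum>i\<in>UNIV. \<bar>H2 ps (fst \<theta>) (fst (snd \<theta>)) (fst (snd (snd \<theta>))) (snd (snd (snd \<theta>))) $ i\<bar>)"

lemma cont_mixT: "continuous (at z) (\<lambda>\<theta>. mixT \<theta> x)"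
  unfolding mixT_def mix2_def by (intro continuous_intros)

lemma cont_DT:
  assumes "\<And>x. mixT z x \<noteq> 0"
  shows "continuous (at z) (DT ps)"
  unfolding DT_def G1_def G2_def using assms
  unfolding mixT_def mix2_def by (intro continuous_intros) auto

lemma cont_KT:
  assumes "\<And>x. mixT z x \<noteq> 0"
  shows "continuous (at z) (KT ps)"
  unfolding KT_def H1_def H2_def vec_lambda_beta
  using assms cont_DT[OF assms]
  unfolding mixT_def mix2_def by (intro continuous_intros) auto




lemma ev_gt: "continuous (at z) g \<Longrightarrow> (c::real) < g z \<Longrightarrow> eventually (\<lambda>\<theta>. c < g \<theta>) (nhds z)"
  unfolding continuous_at tendsto_at_iff_tendsto_nhds by (rule order_tendstoD(1))

lemma ev_lt: "continuous (at z) g \<Longrightarrow> g z < (c::real) \<Longrightarrow> eventually (\<lambda>\<theta>. g \<theta> < c) (nhds z)"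
  unfolding continuous_at tendsto_at_iff_tendsto_nhds by (rule order_tendstoD(2))

context bmix begin

abbreviation "base \<equiv> ((0::real), (1::real), mu1, xb)"

lemma mixT_base: "mixT base x = bern x xb"
  by (simp add: mixT_def mix2_def)

lemma DT_base: "DT ps base = Z1 p1 p2 (lam xb ((s1 - s2)/\<^sub>R 2) mu1) - 1"
  using G1_base G2_base by (simp add: DT_def)

lemma nbhd:
  "\<exists>r>0. \<exists>\<eta>>0. \<exists>M>0. \<exists>s0>0. s0 \<le> 1/8 \<and> (\<forall>\<theta>. dist \<theta> base < r \<longrightarrow>
     (\<forall>x. mixT \<theta> x > 0) \<and> DT ps \<theta> < -\<eta> \<and> KT ps \<theta> \<le> M \<and>
     (\<forall>i. 0 < snd (snd (snd \<theta>)) $ i \<and> snd (snd (snd \<theta>)) $ i < 1 \<and>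
          s0 \<le> snd (snd (snd \<theta>)) $ i * (1 - snd (snd (snd \<theta>)) $ i)))"
proof -
  define \<eta> where "\<eta> = (1 - Z1 p1 p2 (lam xb ((s1 - s2)/\<^sub>R 2) mu1)) / 2"
  have \<eta>: "\<eta> > 0" using Zlt unfolding \<eta>_def by simp
  define M where "M = KT ps base + 1"
  have KT0: "KT ps base \<ge> 0" unfolding KT_def by (intro add_nonneg_nonneg mult_nonneg_nonneg sum_nonneg) auto
  then have M: "M > 0" unfolding M_def by simp
  define s0 where "s0 = Min (range (\<lambda>i. xb$i * (1 - xb$i))) / 2"
  have xq: "0 < xb$i * (1 - xb$i)" for i using xb_pos[of i] xb_lt1[of i] by simp
  have "0 < Min (range (\<lambda>i. xb$i * (1 - xb$i)))" using xq by (auto simp: Min_gr_iff)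
  then have s0pos: "s0 > 0" unfolding s0_def by simp
  have s0lt: "s0 < xb$i * (1 - xb$i)" for i
  proof -
    have "Min (range (\<lambda>i. xb$i * (1 - xb$i))) \<le> xb$i * (1 - xb$i)" by (intro Min_le) auto
    then show ?thesis unfolding s0_def using xq[of i] by linarith
  qed
  have s0half: "2 * s0 \<le> xb$i * (1 - xb$i)" for i
  proof -
    have "Min (range (\<lambda>i. xb$i * (1 - xb$i))) \<le> xb$i * (1 - xb$i)" by (intro Min_le) auto
    then show ?thesis unfolding s0_def by linarith
  qed
  have s0le: "s0 \<le> 1/8"
  proof -
    obtain i :: 'd where True by simp
    have "xb$i * (1 - xb$i) \<le> 1/4"
      using sum_squares_ge_zero[of "xb$i - 1/2" 0] by (simp add: power2_eq_square algebra_simps)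
    then show ?thesis using s0half[of i] by simp
  qed
  have mix0: "mixT base x \<noteq> 0" for x using bern_xb_pos[of x] mixT_base[of x] by simp
  have e1: "eventually (\<lambda>\<theta>. \<forall>x. 0 < mixT \<theta> x) (nhds base)"
    by (intro eventually_all_finite allI ev_gt cont_mixT) (simp add: mixT_base bern_xb_pos)
  have e2: "eventually (\<lambda>\<theta>. DT ps \<theta> < -\<eta>) (nhds base)"
  proof (intro ev_lt cont_DT mix0)
    define Z where "Z = Z1 p1 p2 (lam xb ((s1 - s2)/\<^sub>R 2) mu1)"
    have a: "DT ps base = Z - 1" using DT_base unfolding Z_def .
    have b: "Z < 1" using Zlt unfolding Z_def .
    have c: "\<eta> = (1 - Z) / 2" unfolding \<eta>_def Z_def ..
    show "DT ps base < - \<eta>" unfolding a c using b by (simp add: field_simps)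
  qed
  have e3: "eventually (\<lambda>\<theta>. KT ps \<theta> < M) (nhds base)"
    by (intro ev_lt cont_KT mix0) (simp add: M_def)
  have e4: "eventually (\<lambda>\<theta>. \<forall>i. 0 < snd (snd (snd \<theta>)) $ i \<and> snd (snd (snd \<theta>)) $ i < 1 \<and>
          s0 < snd (snd (snd \<theta>)) $ i * (1 - snd (snd (snd \<theta>)) $ i)) (nhds base)"
    apply (intro eventually_all_finite allI eventually_conj)
      apply (rule ev_gt, intro continuous_intros, simp add: xb_pos)
     apply (rule ev_lt, intro continuous_intros, simp add: xb_lt1)
    apply (rule ev_gt, intro continuous_intros, simp add: s0lt)
    done
  have "eventually (\<lambda>\<theta>. (\<forall>x. 0 < mixT \<theta> x) \<and> DT ps \<theta> < -\<eta> \<and> KT ps \<theta> < M \<and>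
      (\<forall>i. 0 < snd (snd (snd \<theta>)) $ i \<and> snd (snd (snd \<theta>)) $ i < 1 \<and>
          s0 < snd (snd (snd \<theta>)) $ i * (1 - snd (snd (snd \<theta>)) $ i))) (nhds base)"
    using e1 e2 e3 e4 by (intro eventually_conj)
  then obtain r where r: "r > 0" "\<forall>\<theta>. dist \<theta> base < r \<longrightarrow> (\<forall>x. 0 < mixT \<theta> x) \<and> DT ps \<theta> < -\<eta> \<and> KT ps \<theta> < M \<and>
      (\<forall>i. 0 < snd (snd (snd \<theta>)) $ i \<and> snd (snd (snd \<theta>)) $ i < 1 \<and>
          s0 < snd (snd (snd \<theta>)) $ i * (1 - snd (snd (snd \<theta>)) $ i))"
    unfolding eventually_nhds_metric by blast
  have P: "(\<forall>x. mixT \<theta> x > 0) \<and> DT ps \<theta> < -\<eta> \<and> KT ps \<theta> \<le> M \<and>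
     (\<forall>i. 0 < snd (snd (snd \<theta>)) $ i \<and> snd (snd (snd \<theta>)) $ i < 1 \<and>
          s0 \<le> snd (snd (snd \<theta>)) $ i * (1 - snd (snd (snd \<theta>)) $ i))"
    if "dist \<theta> base < r" for \<theta>
    using r(2)[rule_format, OF that] by (auto intro: less_imp_le)
  show ?thesis using r(1) \<eta> M s0pos s0le P by blast
qed

end



lemma step_gen:
  fixes m1 m2 :: "real^'d::finite"
  assumes pos: "\<forall>x. mixT (a, b, m1, m2) x > 0" and D: "DT ps (a, b, m1, m2) < -\<eta>"
    and \<eta>: "\<eta> > 0" and \<alpha>: "\<alpha> > 0" and a: "0 \<le> a" "a \<le> 1" "b = 1 - a"
  shows "\<exists>a'. gd_step ps \<alpha> (a, b, m1, m2) =
      (a', 1 - a', m1 + (\<alpha> * a) *\<^sub>R H1 ps a b m1 m2, m2 + (\<alpha> * b) *\<^sub>R H2 ps a b m1 m2)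
    \<and> 0 \<le> a' \<and> a' \<le> 1 \<and> a' \<le> max 0 (a - \<alpha> * \<eta> / 2)
    \<and> \<bar>a' - a\<bar> \<le> \<alpha> * \<bar>DT ps (a, b, m1, m2)\<bar> / 2 \<and> (a = 0 \<longrightarrow> a' = 0)"
proof -
  define d where "d = DT ps (a, b, m1, m2)"
  have dd: "G1 ps a b m1 m2 - G2 ps a b m1 m2 = d" unfolding d_def DT_def by simp
  have pos': "\<And>x. mix2 a b m1 m2 x > 0" using pos by (simp add: mixT_def)
  have st: "gd_step ps \<alpha> (a, b, m1, m2) = (max 0 (min 1 (a + \<alpha> * d / 2)), 1 - max 0 (min 1 (a + \<alpha> * d / 2)),
     m1 + (\<alpha> * a) *\<^sub>R H1 ps a b m1 m2, m2 + (\<alpha> * b) *\<^sub>R H2 ps a b m1 m2)"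
    using gd_step_eq[OF a(3) pos', of ps \<alpha>] dd by simp
  have dn: "d < -\<eta>" using D d_def by simp
  have "\<alpha> * d < \<alpha> * (-\<eta>)" using dn \<alpha> by (intro mult_strict_left_mono) auto
  then have lt: "\<alpha> * d / 2 < - (\<alpha> * \<eta> / 2)" by simp
  have "0 < \<alpha> * \<eta>" using \<alpha> \<eta> by simp
  then have neg: "\<alpha> * d < 0" using lt by linarith
  have m: "min 1 (a + \<alpha> * d / 2) = a + \<alpha> * d / 2" using a neg by simp
  show ?thesis
  proof (intro exI conjI)
    show "gd_step ps \<alpha> (a, b, m1, m2) = (max 0 (a + \<alpha> * d / 2), 1 - max 0 (a + \<alpha> * d / 2),
     m1 + (\<alpha> * a) *\<^sub>R H1 ps a b m1 m2, m2 + (\<alpha> * b) *\<^sub>R H2 ps a b m1 m2)"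
      using st m by simp
    show "0 \<le> max 0 (a + \<alpha> * d / 2)" by simp
    show "max 0 (a + \<alpha> * d / 2) \<le> 1" using a neg by simp
    show "max 0 (a + \<alpha> * d / 2) \<le> max 0 (a - \<alpha> * \<eta> / 2)" using lt by simp
    show "\<bar>max 0 (a + \<alpha> * d / 2) - a\<bar> \<le> \<alpha> * \<bar>DT ps (a, b, m1, m2)\<bar> / 2"
      unfolding d_def[symmetric] using a neg \<alpha> by (auto simp: abs_if max_def)
    show "a = 0 \<longrightarrow> max 0 (a + \<alpha> * d / 2) = 0" using neg by simp
  qed
qed

lemma norm4: "norm ((w, x, y, z) :: 'd::finite param) \<le> \<bar>w\<bar> + \<bar>x\<bar> + norm y + norm z"
proof -
  have "norm (w, x, y, z) \<le> norm w + norm (x, y, z)" by (rule norm_Pair_le)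
  also have "norm (x, y, z) \<le> norm x + norm (y, z)" by (rule norm_Pair_le)
  also have "norm (y, z) \<le> norm y + norm z" by (rule norm_Pair_le)
  finally show ?thesis by simp
qed

lemma step_dist:
  fixes m1 m2 :: "real^'d::finite"
  assumes "gd_step ps \<alpha> (a, b, m1, m2) =
      (a', 1 - a', m1 + (\<alpha> * a) *\<^sub>R H1 ps a b m1 m2, m2 + (\<alpha> * b) *\<^sub>R H2 ps a b m1 m2)"
    and "\<bar>a' - a\<bar> \<le> \<alpha> * \<bar>DT ps (a, b, m1, m2)\<bar> / 2" and "b = 1 - a" and "\<alpha> > 0"
  shows "dist (gd_step ps \<alpha> (a, b, m1, m2)) (a, b, m1, m2) \<le> \<alpha> * KT ps (a, b, m1, m2)"
proof -
  let ?H1 = "H1 ps a b m1 m2" and ?H2 = "H2 ps a b m1 m2"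
  have "dist (gd_step ps \<alpha> (a, b, m1, m2)) (a, b, m1, m2)
      = norm ((a' - a, (1 - a') - b, (\<alpha> * a) *\<^sub>R ?H1, (\<alpha> * b) *\<^sub>R ?H2) :: 'd param)"
    unfolding assms(1) dist_norm by simp
  also have "\<dots> \<le> \<bar>a' - a\<bar> + \<bar>(1 - a') - b\<bar> + norm ((\<alpha> * a) *\<^sub>R ?H1) + norm ((\<alpha> * b) *\<^sub>R ?H2)"
    by (rule norm4)
  also have "\<bar>(1 - a') - b\<bar> = \<bar>a' - a\<bar>" using assms(3) by simp
  also have "norm ((\<alpha> * a) *\<^sub>R ?H1) \<le> \<alpha> * (\<bar>a\<bar> * (\<Sum>i\<in>UNIV. \<bar>?H1 $ i\<bar>))"
    using norm_le_l1_cart[of ?H1] assms(4)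
    by (simp add: abs_mult mult.assoc mult_left_mono)
  also have "norm ((\<alpha> * b) *\<^sub>R ?H2) \<le> \<alpha> * (\<bar>b\<bar> * (\<Sum>i\<in>UNIV. \<bar>?H2 $ i\<bar>))"
    using norm_le_l1_cart[of ?H2] assms(4)
    by (simp add: abs_mult mult.assoc mult_left_mono)
  finally show ?thesis
    using assms(2) unfolding KT_def by (simp add: algebra_simps)
qed

lemma dist_last_mono:
  fixes m1 m m' xb mu1 :: "real^'d::finite"
  assumes "norm (m - xb) \<le> norm (m' - xb)"
  shows "dist ((0::real), (1::real), m1, m) (0, 1, mu1, xb) \<le> dist ((0::real), (1::real), m1, m') (0, 1, mu1, xb)"
proof -
  have "norm (m - xb)^2 \<le> norm (m' - xb)^2" using assms by (simp add: power_mono)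
  then show ?thesis unfolding dist_Pair_Pair dist_norm by (simp add: norm_Pair)
qed

context bmix begin

lemma step_ball:
  fixes \<theta> :: "'d param"
  assumes nb: "\<forall>\<theta>. dist \<theta> base < r \<longrightarrow>
     (\<forall>x. mixT \<theta> x > 0) \<and> DT ps \<theta> < -\<eta> \<and> KT ps \<theta> \<le> M \<and>
     (\<forall>i. 0 < snd (snd (snd \<theta>)) $ i \<and> snd (snd (snd \<theta>)) $ i < 1 \<and>
          s0 \<le> snd (snd (snd \<theta>)) $ i * (1 - snd (snd (snd \<theta>)) $ i))"
    and \<eta>: "\<eta> > 0" and \<alpha>: "\<alpha> > 0"
    and d: "dist (a, 1 - a, m1, m2) base < r" and a: "0 \<le> a" "a \<le> 1"
  shows "\<exists>a' m1' m2'. gd_step ps \<alpha> (a, 1 - a, m1, m2) = (a', 1 - a', m1', m2')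
     \<and> 0 \<le> a' \<and> a' \<le> 1 \<and> a' \<le> max 0 (a - \<alpha> * \<eta> / 2)
     \<and> dist (gd_step ps \<alpha> (a, 1 - a, m1, m2)) (a, 1 - a, m1, m2) \<le> \<alpha> * M
     \<and> (a = 0 \<longrightarrow> a' = 0 \<and> m1' = m1 \<and>
          (\<forall>i. 0 < m2 $ i \<and> m2 $ i < 1 \<and> s0 \<le> m2 $ i * (1 - m2 $ i) \<and>
             m2' $ i = m2 $ i + \<alpha> * ((xb $ i - m2 $ i) / (m2 $ i * (1 - m2 $ i)))))"
proof -
  have P: "(\<forall>x. mixT (a, 1 - a, m1, m2) x > 0)" "DT ps (a, 1 - a, m1, m2) < -\<eta>"
    "KT ps (a, 1 - a, m1, m2) \<le> M"
    "\<forall>i. 0 < m2 $ i \<and> m2 $ i < 1 \<and> s0 \<le> m2 $ i * (1 - m2 $ i)"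
    using nb d by auto
  obtain a' where A: "gd_step ps \<alpha> (a, 1 - a, m1, m2) =
      (a', 1 - a', m1 + (\<alpha> * a) *\<^sub>R H1 ps a (1 - a) m1 m2, m2 + (\<alpha> * (1 - a)) *\<^sub>R H2 ps a (1 - a) m1 m2)"
    "0 \<le> a'" "a' \<le> 1" "a' \<le> max 0 (a - \<alpha> * \<eta> / 2)"
    "\<bar>a' - a\<bar> \<le> \<alpha> * \<bar>DT ps (a, 1 - a, m1, m2)\<bar> / 2" "a = 0 \<longrightarrow> a' = 0"
    using step_gen[OF P(1) P(2) \<eta> \<alpha> a refl] by blast
  have dist: "dist (gd_step ps \<alpha> (a, 1 - a, m1, m2)) (a, 1 - a, m1, m2) \<le> \<alpha> * M"
    using step_dist[OF A(1) A(5) refl \<alpha>] P(3) \<alpha> by (smt (verit) mult_left_mono)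
  have ph2: "(m2 + (\<alpha> * (1 - a)) *\<^sub>R H2 ps a (1 - a) m1 m2) $ i = m2 $ i + \<alpha> * ((xb $ i - m2 $ i) / (m2 $ i * (1 - m2 $ i)))"
    if "a = 0" for i
    using H2_phase2[of m2 m1 i] P(4) that by simp
  show ?thesis
    apply (rule exI[of _ a'], rule exI[of _ "m1 + (\<alpha> * a) *\<^sub>R H1 ps a (1 - a) m1 m2"],
       rule exI[of _ "m2 + (\<alpha> * (1 - a)) *\<^sub>R H2 ps a (1 - a) m1 m2"])
    using A dist ph2 P(4) by auto
qed

end



lemma lin_aux: "(x::real) \<le> y + w \<Longrightarrow> y \<le> z \<Longrightarrow> d + z = r / 4 \<Longrightarrow> w < r / 4 \<Longrightarrow> 0 < r \<Longrightarrow> x + d < r"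
  by linarith

lemma max_aux: "(a'::real) \<le> max 0 (a - h) \<Longrightarrow> a \<le> max 0 (a0 - k) \<Longrightarrow> 0 \<le> h \<Longrightarrow> a' \<le> max 0 (a0 - (k + h))"
  by (simp add: max_def split: if_splits)

context bmix begin

theorem attract:
  "\<exists>\<alpha>0>0. \<forall>\<alpha>. 0 < \<alpha> \<and> \<alpha> < \<alpha>0 \<longrightarrow>
     (\<exists>\<delta>>0. \<forall>\<theta>0 :: 'd param.
        (fst \<theta>0, fst (snd \<theta>0)) \<in> simplex2 \<and> dist \<theta>0 base < \<delta>
        \<longrightarrow> (\<exists>\<theta>lim. (\<lambda>n. (gd_step ps \<alpha> ^^ n) \<theta>0) \<longlonglongrightarrow> \<theta>lim \<and> fst \<theta>lim = 0))"
proof -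
  obtain r \<eta> M s0 where r: "r > 0" and \<eta>: "\<eta> > 0" and M: "M > 0" and s0: "s0 > 0" "s0 \<le> 1/8"
    and nb: "\<forall>\<theta>. dist \<theta> base < r \<longrightarrow>
     (\<forall>x. mixT \<theta> x > 0) \<and> DT ps \<theta> < -\<eta> \<and> KT ps \<theta> \<le> M \<and>
     (\<forall>i. 0 < snd (snd (snd \<theta>)) $ i \<and> snd (snd (snd \<theta>)) $ i < 1 \<and>
          s0 \<le> snd (snd (snd \<theta>)) $ i * (1 - snd (snd (snd \<theta>)) $ i))"
    using nbhd by blast
  define \<alpha>0 where "\<alpha>0 = min s0 (r / (4 * M))"
  have \<alpha>0: "\<alpha>0 > 0" unfolding \<alpha>0_def using s0 r M by simp
  show ?thesis
  proof (rule exI[of _ \<alpha>0], intro conjI allI impI \<alpha>0)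
    fix \<alpha> assume "0 < \<alpha> \<and> \<alpha> < \<alpha>0"
    then have \<alpha>: "0 < \<alpha>" "\<alpha> < s0" "\<alpha> < r / (4 * M)" unfolding \<alpha>0_def by auto
    have \<alpha>M: "\<alpha> * M < r / 4" using \<alpha>(3) M by (simp add: field_simps)
    define K where "K = \<eta> + 2 * M"
    have K: "K > 0" unfolding K_def using \<eta> M by simp
    define \<delta> where "\<delta> = r * \<eta> / (4 * K)"
    have \<delta>: "\<delta> > 0" unfolding \<delta>_def using r \<eta> K by simp
    have e1': "\<delta> * K = r * \<eta> / 4"
      unfolding \<delta>_def using K by simp
    have e1: "\<delta> * (\<eta> + 2 * M) = r * \<eta> / 4" using e1' unfolding K_def .
    have \<delta>eq: "\<delta> + 2 * \<delta> * M / \<eta> = r / 4"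
    proof -
      have "\<delta> + 2 * \<delta> * M / \<eta> = \<delta> * (\<eta> + 2 * M) / \<eta>" using \<eta> by (simp add: field_simps)
      also have "\<dots> = r / 4" unfolding e1 using \<eta> by simp
      finally show ?thesis .
    qed
    show "\<exists>\<delta>>0. \<forall>\<theta>0 :: 'd param.
        (fst \<theta>0, fst (snd \<theta>0)) \<in> simplex2 \<and> dist \<theta>0 base < \<delta>
        \<longrightarrow> (\<exists>\<theta>lim. (\<lambda>n. (gd_step ps \<alpha> ^^ n) \<theta>0) \<longlonglongrightarrow> \<theta>lim \<and> fst \<theta>lim = 0)"
    proof (rule exI[of _ \<delta>], intro conjI allI impI \<delta>)
      fix \<theta>0 :: "'d param"
      assume h0: "(fst \<theta>0, fst (snd \<theta>0)) \<in> simplex2 \<and> dist \<theta>0 base < \<delta>"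
      obtain a0 b0 m10 m20 where th0: "\<theta>0 = (a0, b0, m10, m20)" by (cases \<theta>0) auto
      have a0: "0 \<le> a0" "a0 \<le> 1" "b0 = 1 - a0" using h0 unfolding th0 simplex2_def by auto
      have d0: "dist \<theta>0 base < \<delta>" using h0 by simp
      have a0\<delta>: "a0 < \<delta>"
        using dist_fst_le[of \<theta>0 base] d0 a0 unfolding th0 by (simp add: dist_real_def)
      define f where "f = gd_step ps \<alpha>"
      define T where "T n = (f ^^ n) \<theta>0" for n
      have TS: "T (Suc n) = f (T n)" for n unfolding T_def by simp
      define N where "N = nat \<lceil>2 * a0 / (\<alpha> * \<eta>)\<rceil>"
      have Nge: "2 * a0 / (\<alpha> * \<eta>) \<le> real N"
        unfolding N_def by linarith
      have Nle: "real N \<le> 2 * a0 / (\<alpha> * \<eta>) + 1"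
      proof -
        have "0 \<le> 2 * a0 / (\<alpha> * \<eta>)" using a0 \<alpha> \<eta> by simp
        then show ?thesis unfolding N_def by linarith
      qed
      have bound: "real n * \<alpha> * M + \<delta> < r" if "n \<le> N" for n
      proof -
        have "real n * \<alpha> * M \<le> real N * (\<alpha> * M)"
          using that \<alpha> M by (simp add: mult.assoc mult_right_mono)
        also have "\<dots> \<le> (2 * a0 / (\<alpha> * \<eta>) + 1) * (\<alpha> * M)"
          using Nle \<alpha> M by (intro mult_right_mono) auto
        also have "\<dots> = 2 * a0 * M / \<eta> + \<alpha> * M"
          using \<alpha> \<eta> by (simp add: field_simps)
        finally have c1: "real n * \<alpha> * M \<le> 2 * a0 * M / \<eta> + \<alpha> * M" .
        have c2: "2 * a0 * M / \<eta> \<le> 2 * \<delta> * M / \<eta>"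
          using a0\<delta> M \<eta> by (intro divide_right_mono mult_right_mono) auto
        show ?thesis using lin_aux[OF c1 c2 \<delta>eq \<alpha>M r] .
      qed
      have P1: "\<exists>a m1 m2. T n = (a, 1 - a, m1, m2) \<and> 0 \<le> a \<and> a \<le> 1
          \<and> a \<le> max 0 (a0 - real n * \<alpha> * \<eta> / 2) \<and> dist (T n) \<theta>0 \<le> real n * \<alpha> * M"
        if "n \<le> N" for n
        using that
      proof (induction n)
        case 0
        show ?case using a0 unfolding T_def th0 by auto
      next
        case (Suc n)
        then obtain a m1 m2 where IH: "T n = (a, 1 - a, m1, m2)" "0 \<le> a" "a \<le> 1"
          "a \<le> max 0 (a0 - real n * \<alpha> * \<eta> / 2)" "dist (T n) \<theta>0 \<le> real n * \<alpha> * M"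
          by auto
        have "dist (T n) base \<le> dist (T n) \<theta>0 + dist \<theta>0 base" by (rule dist_triangle)
        also have "\<dots> < real n * \<alpha> * M + \<delta>" using IH(5) d0 by simp
        also have "\<dots> < r" using bound Suc.prems by simp
        finally have dn: "dist (a, 1 - a, m1, m2) base < r" using IH(1) by simp
        obtain a' m1' m2' where S: "f (a, 1 - a, m1, m2) = (a', 1 - a', m1', m2')" "0 \<le> a'" "a' \<le> 1"
          "a' \<le> max 0 (a - \<alpha> * \<eta> / 2)" "dist (f (a, 1 - a, m1, m2)) (a, 1 - a, m1, m2) \<le> \<alpha> * M"
          using step_ball[OF nb \<eta> \<alpha>(1) dn IH(2,3)] unfolding f_def by blast
        have "a' \<le> max 0 (a0 - (real n * \<alpha> * \<eta> / 2 + \<alpha> * \<eta> / 2))"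
          using max_aux[OF S(4) IH(4)] \<alpha> \<eta> by simp
        moreover have "real n * \<alpha> * \<eta> / 2 + \<alpha> * \<eta> / 2 = real (Suc n) * \<alpha> * \<eta> / 2"
          by (simp add: algebra_simps)
        ultimately have "a' \<le> max 0 (a0 - real (Suc n) * \<alpha> * \<eta> / 2)" by simp
        moreover have "dist (T (Suc n)) \<theta>0 \<le> real (Suc n) * \<alpha> * M"
        proof -
          have "dist (T (Suc n)) \<theta>0 \<le> dist (T (Suc n)) (T n) + dist (T n) \<theta>0" by (rule dist_triangle)
          also have "\<dots> \<le> \<alpha> * M + real n * \<alpha> * M" using S(5) IH(1,5) TS[of n] by simp
          finally show ?thesis by (simp add: algebra_simps)
        qed
        ultimately show ?case using S(1,2,3) TS[of n] IH(1) by auto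
      qed
      obtain m1N m2N where TN: "T N = (0, 1, m1N, m2N)" and dN: "dist (T N) base < r"
      proof -
        obtain a m1 m2 where A: "T N = (a, 1 - a, m1, m2)" "0 \<le> a"
          "a \<le> max 0 (a0 - real N * \<alpha> * \<eta> / 2)" "dist (T N) \<theta>0 \<le> real N * \<alpha> * M"
          using P1[of N] by auto
        have "a0 \<le> real N * \<alpha> * \<eta> / 2" using Nge \<alpha> \<eta> by (simp add: field_simps)
        then have "a = 0" using A(2,3) by simp
        moreover have "dist (T N) base < r"
        proof -
          have "dist (T N) base \<le> dist (T N) \<theta>0 + dist \<theta>0 base" by (rule dist_triangle)
          also have "\<dots> < real N * \<alpha> * M + \<delta>" using A(4) d0 by simp
          also have "\<dots> < r" using bound by simp
          finally show ?thesis .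
        qed
        ultimately show ?thesis using A(1) that by simp
      qed
      define q where "q = 1 - 4 * \<alpha>"
      have q: "0 \<le> q" "q < 1" unfolding q_def using \<alpha> s0 by auto
      have P2: "\<exists>m. T (N + k) = (0, 1, m1N, m) \<and> (\<forall>i. \<bar>m $ i - xb $ i\<bar> \<le> q ^ k * \<bar>m2N $ i - xb $ i\<bar>)" for k
      proof (induction k)
        case 0
        show ?case using TN by simp
      next
        case (Suc k)
        then obtain m where IH: "T (N + k) = (0, 1, m1N, m)" "\<forall>i. \<bar>m $ i - xb $ i\<bar> \<le> q ^ k * \<bar>m2N $ i - xb $ i\<bar>"
          by auto
        have "norm (m - xb) \<le> norm (m2N - xb)"
        proof (rule norm_le_componentwise_cart)
          fix i
          have "q ^ k \<le> 1" using q by (simp add: power_le_one)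
          then have "q ^ k * \<bar>m2N $ i - xb $ i\<bar> \<le> \<bar>m2N $ i - xb $ i\<bar>"
            using q by (intro mult_left_le_one_le) auto
          then show "norm ((m - xb) $ i) \<le> norm ((m2N - xb) $ i)" using IH(2)[rule_format, of i] by simp
        qed
        then have "dist ((0::real), (1::real), m1N, m) base \<le> dist ((0::real), (1::real), m1N, m2N) base"
          by (rule dist_last_mono)
        then have dk: "dist (0, 1 - 0, m1N, m) base < r" using dN TN by simp
        obtain a' m1' m2' where S: "f (0, 1 - 0, m1N, m) = (a', 1 - a', m1', m2')"
          "0 = 0 \<longrightarrow> a' = 0 \<and> m1' = m1N \<and>
          (\<forall>i. 0 < m $ i \<and> m $ i < 1 \<and> s0 \<le> m $ i * (1 - m $ i) \<and>
             m2' $ i = m $ i + \<alpha> * ((xb $ i - m $ i) / (m $ i * (1 - m $ i))))"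
          using step_ball[OF nb \<eta> \<alpha>(1) dk] unfolding f_def by auto
        have "\<bar>m2' $ i - xb $ i\<bar> \<le> q ^ Suc k * \<bar>m2N $ i - xb $ i\<bar>" for i
        proof -
          define Q where "Q = m $ i * (1 - m $ i)"
          have Q: "s0 \<le> Q" "Q > 0" "m2' $ i = m $ i + \<alpha> * ((xb $ i - m $ i) / Q)"
            using S(2) s0 unfolding Q_def by auto
          have Q4: "Q \<le> 1/4" unfolding Q_def
            using sum_squares_ge_zero[of "m $ i - 1/2" 0] by (simp add: power2_eq_square algebra_simps)
          have "m2' $ i - xb $ i = (m $ i - xb $ i) * (1 - \<alpha> / Q)"
            using Q(2,3) by (simp add: field_simps)
          moreover have "0 \<le> 1 - \<alpha> / Q" using \<alpha>(2) Q by simp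
          moreover have "1 - \<alpha> / Q \<le> q"
          proof -
            have "4 * \<alpha> * Q \<le> \<alpha>" using Q4 \<alpha>(1) by (simp add: mult_left_le)
            hence "4 * \<alpha> \<le> \<alpha> / Q" using Q(2) by (simp add: field_simps)
            thus ?thesis unfolding q_def by simp
          qed
          ultimately have "\<bar>m2' $ i - xb $ i\<bar> \<le> \<bar>m $ i - xb $ i\<bar> * q"
            by (simp add: abs_mult mult_left_mono)
          also have "\<dots> \<le> q ^ k * \<bar>m2N $ i - xb $ i\<bar> * q"
            using IH(2) q by (simp add: mult_right_mono)
          finally show ?thesis by (simp add: algebra_simps)
        qed
        moreover have "T (N + Suc k) = (0, 1, m1N, m2')" using S TS[of "N + k"] IH(1) by simp
        ultimately show ?case by auto
      qed
      define lim where "lim = ((0::real), (1::real), m1N, xb)"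
      have "(\<lambda>k. T (k + N)) \<longlonglongrightarrow> lim"
      proof -
        define mm where "mm k = snd (snd (snd (T (N + k))))" for k
        have Tk: "T (k + N) = (0, 1, m1N, mm k)" for k
          using P2[of k] unfolding mm_def by (auto simp: add.commute)
        have mb: "\<bar>mm k $ i - xb $ i\<bar> \<le> q ^ k * \<bar>m2N $ i - xb $ i\<bar>" for k i
          using P2[of k] unfolding mm_def by auto
        have "(\<lambda>k. mm k - xb) \<longlonglongrightarrow> 0"
        proof (rule Lim_null_comparison)
          show "\<forall>\<^sub>F k in sequentially. norm (mm k - xb) \<le> q ^ k * norm (m2N - xb)"
          proof (intro always_eventually allI)
            fix k
            have "norm (mm k - xb) \<le> norm (q ^ k *\<^sub>R (m2N - xb))"
              by (rule norm_le_componentwise_cart) (use mb q in \<open>simp add: abs_mult\<close>)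
            then show "norm (mm k - xb) \<le> q ^ k * norm (m2N - xb)" using q by simp
          qed
          show "(\<lambda>k. q ^ k * norm (m2N - xb)) \<longlonglongrightarrow> 0"
            using tendsto_mult[OF LIMSEQ_power_zero[of q] tendsto_const[of "norm (m2N - xb)"]] q
            by simp
        qed
        then have "mm \<longlonglongrightarrow> xb" by (simp add: Lim_null[symmetric])
        then have "(\<lambda>k. ((0::real), (1::real), m1N, mm k)) \<longlonglongrightarrow> lim"
          unfolding lim_def by (intro tendsto_Pair tendsto_const)
        then show ?thesis unfolding Tk .
      qed
      then have "T \<longlonglongrightarrow> lim" by (rule LIMSEQ_offset)
      then show "\<exists>\<theta>lim. (\<lambda>n. (gd_step ps \<alpha> ^^ n) \<theta>0) \<longlonglongrightarrow> \<theta>lim \<and> fst \<theta>lim = 0"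
        unfolding T_def f_def lim_def by auto
    qed
  qed
qed

end


theorem mainTheorem4:
  fixes pistar1 pistar2 :: real
    and mustar1 mustar2 mu1 :: "real^'d::finite"
  assumes "0 < pistar1" "pistar1 < 1" "pistar2 = 1 - pistar1"
    and "\<forall>i. 0 \<le> mustar1$i \<and> mustar1$i \<le> 1"
    and "\<forall>i. 0 \<le> mustar2$i \<and> mustar2$i \<le> 1"
    and "\<forall>i j. i \<noteq> j \<longrightarrow>
           4 * pistar1 * pistar2 * ((mustar1 - mustar2)/\<^sub>R 2)$i * ((mustar1 - mustar2)/\<^sub>R 2)$j \<noteq> 0"
    and "\<forall>i. 0 \<le> mu1$i \<and> mu1$i \<le> 1"
    and "Z1 pistar1 pistar2
           (lam (xmean (mix2 pistar1 pistar2 mustar1 mustar2)) ((mustar1 - mustar2)/\<^sub>R 2) mu1) < 1"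
  shows "\<exists>\<alpha>0>0. \<forall>\<alpha>. 0 < \<alpha> \<and> \<alpha> < \<alpha>0 \<longrightarrow>
           (\<exists>\<delta>>0. \<forall>\<theta>0 :: 'd param.
              (fst \<theta>0, fst (snd \<theta>0)) \<in> simplex2
              \<and> (\<forall>i. 0 \<le> fst (snd (snd \<theta>0))$i \<and> fst (snd (snd \<theta>0))$i \<le> 1)
              \<and> (\<forall>i. 0 \<le> snd (snd (snd \<theta>0))$i \<and> snd (snd (snd \<theta>0))$i \<le> 1)
              \<and> dist \<theta>0 (0, 1, mu1, xmean (mix2 pistar1 pistar2 mustar1 mustar2)) < \<delta>
              \<longrightarrow> (\<exists>\<theta>lim.
                     (\<lambda>n. (gd_step (mix2 pistar1 pistar2 mustar1 mustar2) \<alpha> ^^ n) \<theta>0) \<longlonglongrightarrow> \<theta>lim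
                     \<and> fst \<theta>lim = 0))"
proof -
  interpret bmix pistar1 pistar2 mustar1 mustar2 mu1
    using assms by unfold_locales auto
  have A: ?thesis if "\<exists>\<alpha>0>0. \<forall>\<alpha>. 0 < \<alpha> \<and> \<alpha> < \<alpha>0 \<longrightarrow>
     (\<exists>\<delta>>0. \<forall>\<theta>0 :: 'd param.
        (fst \<theta>0, fst (snd \<theta>0)) \<in> simplex2 \<and> dist \<theta>0 base < \<delta>
        \<longrightarrow> (\<exists>\<theta>lim. (\<lambda>n. (gd_step ps \<alpha> ^^ n) \<theta>0) \<longlonglongrightarrow> \<theta>lim \<and> fst \<theta>lim = 0))"
  proof -
    from that obtain \<alpha>0 where a0: "\<alpha>0 > 0" and H: "\<And>\<alpha>. 0 < \<alpha> \<and> \<alpha> < \<alpha>0 \<Longrightarrow>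
     (\<exists>\<delta>>0. \<forall>\<theta>0 :: 'd param.
        (fst \<theta>0, fst (snd \<theta>0)) \<in> simplex2 \<and> dist \<theta>0 base < \<delta>
        \<longrightarrow> (\<exists>\<theta>lim. (\<lambda>n. (gd_step ps \<alpha> ^^ n) \<theta>0) \<longlonglongrightarrow> \<theta>lim \<and> fst \<theta>lim = 0))"
      by blast
    show ?thesis
    proof (rule exI[of _ \<alpha>0], intro conjI allI impI a0)
      fix \<alpha> assume "0 < \<alpha> \<and> \<alpha> < \<alpha>0"
      from H[OF this] obtain \<delta> where d: "\<delta> > 0" and HH: "\<forall>\<theta>0 :: 'd param.
        (fst \<theta>0, fst (snd \<theta>0)) \<in> simplex2 \<and> dist \<theta>0 base < \<delta>
        \<longrightarrow> (\<exists>\<theta>lim. (\<lambda>n. (gd_step ps \<alpha> ^^ n) \<theta>0) \<longlonglongrightarrow> \<theta>lim \<and> fst \<theta>lim = 0)"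
        by blast
      show "\<exists>\<delta>>0. \<forall>\<theta>0 :: 'd param.
              (fst \<theta>0, fst (snd \<theta>0)) \<in> simplex2
              \<and> (\<forall>i. 0 \<le> fst (snd (snd \<theta>0))$i \<and> fst (snd (snd \<theta>0))$i \<le> 1)
              \<and> (\<forall>i. 0 \<le> snd (snd (snd \<theta>0))$i \<and> snd (snd (snd \<theta>0))$i \<le> 1)
              \<and> dist \<theta>0 (0, 1, mu1, xmean (mix2 pistar1 pistar2 mustar1 mustar2)) < \<delta>
              \<longrightarrow> (\<exists>\<theta>lim.
                     (\<lambda>n. (gd_step (mix2 pistar1 pistar2 mustar1 mustar2) \<alpha> ^^ n) \<theta>0) \<longlonglongrightarrow> \<theta>lim
                     \<and> fst \<theta>lim = 0)"
        using d HH by blast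
    qed
  qed
  show ?thesis by (rule A[OF attract])
qed

end
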